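(* Let $(X,\|\cdot\|_X)\subset(Y,\|\cdot\|_Y)$ be normed spaces, $\theta,a\ge0$, $m\in\mathbb N_*$. Then $$B_{\alpha,\beta}(X,Y)\subset S_{\theta,m,a}(X,Y)\qquad\text{with }\alpha=\frac{\theta}{2m},\ \beta=2+a+\frac{\theta}{m}.$$
   Context: $B_X(R)=\{x\in X:\|x\|_X\le R\}$, $d_Y(y,A)=\inf_{x\in A}\|y-x\|_Y$, $B_{\alpha,\beta}(X,Y)=\{y\in Y:\limsup_{R\to\infty}R^\alpha(\ln R)^\beta d_Y(y,B_X(R))<\infty\}$. $\pi_{\theta,m,a}(y,(x_n)_n)=\sum_{n\ge1}\big(2^{n\theta}n^a\|y-x_n\|_Y+2^{-2nm}\|x_n\|_X\big)$, $\rho^{X,Y}_{\theta,m,a}(y)=\inf_{(x_n)\subset X}\pi_{\theta,m,a}(y,(x_n)_n)$, $S_{\theta,m,a}(X,Y)=\{y\in Y:\rho^{X,Y}_{\theta,m,a}(y)<\infty\}$. *)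

theory Defs
  imports "HOL-Analysis.Analysis"
begin

definition normed_subspace :: "'y::real_normed_vector set \<Rightarrow> ('y \<Rightarrow> real) \<Rightarrow> bool" where
  "normed_subspace X nX \<longleftrightarrow> subspace X \<and>
     (\<forall>x\<in>X. 0 \<le> nX x) \<and> (\<forall>x\<in>X. nX x = 0 \<longleftrightarrow> x = 0) \<and>
     (\<forall>c. \<forall>x\<in>X. nX (scaleR c x) = \<bar>c\<bar> * nX x) \<and>
     (\<forall>x\<in>X. \<forall>z\<in>X. nX (x + z) \<le> nX x + nX z)"

definition ballX :: "'y set \<Rightarrow> ('y \<Rightarrow> real) \<Rightarrow> real \<Rightarrow> 'y set" where
  "ballX X nX R = {x\<in>X. nX x \<le> R}"

definition distY :: "'y::real_normed_vector \<Rightarrow> 'y set \<Rightarrow> real" where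
  "distY y A = Inf ((\<lambda>x. norm (y - x)) ` A)"

definition Bspace :: "real \<Rightarrow> real \<Rightarrow> 'y::real_normed_vector set \<Rightarrow> ('y \<Rightarrow> real) \<Rightarrow> 'y set" where
  "Bspace \<alpha> \<beta> X nX = {y. Limsup at_top
      (\<lambda>R. ereal (R powr \<alpha> * (ln R) powr \<beta> * distY y (ballX X nX R))) < \<infinity>}"

text \<open>pi_{theta,m,a}(y,(x_n)_{n>=1}); the sequence is indexed so that xs n is x_{n}
  and the sum runs over n >= 1 (xs 0 is unused).\<close>
definition piS :: "real \<Rightarrow> nat \<Rightarrow> real \<Rightarrow> ('y::real_normed_vector \<Rightarrow> real) \<Rightarrow> 'y \<Rightarrow> (nat \<Rightarrow> 'y) \<Rightarrow> ennreal" where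
  "piS \<theta> m a nX y xs = (\<Sum>k. let n = Suc k in
      ennreal (2 powr (real n * \<theta>) * real n powr a * norm (y - xs n)
               + 2 powr (- 2 * real n * real m) * nX (xs n)))"

definition rhoS :: "real \<Rightarrow> nat \<Rightarrow> real \<Rightarrow> 'y::real_normed_vector set \<Rightarrow> ('y \<Rightarrow> real) \<Rightarrow> 'y \<Rightarrow> ennreal" where
  "rhoS \<theta> m a X nX y = (INF xs\<in>{xs. \<forall>n. xs n \<in> X}. piS \<theta> m a nX y xs)"

definition Sspace :: "real \<Rightarrow> nat \<Rightarrow> real \<Rightarrow> 'y::real_normed_vector set \<Rightarrow> ('y \<Rightarrow> real) \<Rightarrow> 'y set" where
  "Sspace \<theta> m a X nX = {y. rhoS \<theta> m a X nX y < \<infinity>}"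

end

theory Submission
  imports Defs "HOL-Real_Asymp.Real_Asymp"
begin

lemma ln4_gt1: "ln (4::real) > 1"
proof -
  have "exp 1 < (4::real)" using exp_le by linarith
  hence "ln (exp 1) < ln (4::real)" by (subst ln_less_cancel_iff) auto
  thus ?thesis by simp
qed

lemma ev_ln: "eventually (\<lambda>n::nat. 2*ln(real n) \<le> (ln 4 - 1) * real n) sequentially"
proof -
  have "(ln 4 - 1::real) > 0" using ln4_gt1 by simp
  moreover have "\<And>c::real. c > 0 \<Longrightarrow> eventually (\<lambda>n::nat. 2*ln(real n) \<le> c * real n) sequentially"
    by real_asymp
  ultimately show ?thesis by blast
qed

theorem mainTheorem15:
  fixes X :: "'y::real_normed_vector set" and nX :: "'y \<Rightarrow> real"
    and \<theta> a :: real and m :: nat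
  assumes "normed_subspace X nX"
    and "\<theta> \<ge> 0" and "a \<ge> 0" and "m \<ge> 1"
  shows "Bspace (\<theta> / (2 * real m)) (2 + a + \<theta> / real m) X nX \<subseteq> Sspace \<theta> m a X nX"
proof
  fix y assume yB: "y \<in> Bspace (\<theta> / (2 * real m)) (2 + a + \<theta> / real m) X nX"
  define \<alpha> where "\<alpha> = \<theta> / (2 * real m)"
  define \<beta> where "\<beta> = 2 + a + \<theta> / real m"
  have mpos: "real m > 0" using assms(4) by simp
  have bpos: "\<beta> \<ge> 0" unfolding \<beta>_def using assms by simp
  have X0: "0 \<in> X" and nX0: "nX 0 = 0" and nXnn: "\<And>x. x \<in> X \<Longrightarrow> 0 \<le> nX x"
    using assms(1) unfolding normed_subspace_def by (auto simp: subspace_def)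
  define D where "D R = distY y (ballX X nX R)" for R
  have ball_ne: "0 \<in> ballX X nX R" if "R \<ge> 0" for R
    using that X0 nX0 unfolding ballX_def by auto
  have Dnn: "0 \<le> D R" if "R \<ge> 0" for R
    unfolding D_def distY_def using ball_ne[OF that] by (auto intro!: cInf_greatest)
  have Dex: "\<exists>x\<in>ballX X nX R. norm (y - x) < D R + e" if Re: "R \<ge> 0" "e > 0" for R e
  proof -
    have "Inf ((\<lambda>x. norm (y - x)) ` ballX X nX R) < D R + e"
      using Re unfolding D_def distY_def by simp
    then obtain v where "v \<in> (\<lambda>x. norm (y - x)) ` ballX X nX R" "v < D R + e"
      using cInf_lessD ball_ne[OF Re(1)] by (metis empty_iff image_eqI)
    thus ?thesis by auto
  qed
  have "Limsup at_top (\<lambda>R. ereal (R powr \<alpha> * (ln R) powr \<beta> * D R)) < \<infinity>"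
    using yB unfolding Bspace_def \<alpha>_def \<beta>_def D_def by simp
  then obtain k :: nat where "Limsup at_top (\<lambda>R. ereal (R powr \<alpha> * (ln R) powr \<beta> * D R)) < ereal (real k)"
    using less_PInf_Ex_of_nat by auto
  from Limsup_lessD[OF this] obtain R0 where R0: "\<And>R. R \<ge> R0 \<Longrightarrow> R powr \<alpha> * (ln R) powr \<beta> * D R < real k"
    by (auto simp: eventually_at_top_linorder)
  define C where "C = real k"
  have C0: "C \<ge> 0" unfolding C_def by simp
  define R where "R n = 2 powr (2 * real n * real m) * real n powr -2" for n :: nat
  define \<epsilon> where "\<epsilon> n = 2 powr (- (real n * \<theta>)) * real n powr (-a) * real n powr -2" for n :: nat
  have Rnn: "R n \<ge> 0" for n unfolding R_def by simp
  have epos: "\<epsilon> n > 0" if "n \<ge> 1" for n unfolding \<epsilon>_def using that by simp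
  define xs where "xs n = (if n = 0 then 0 else SOME x. x \<in> ballX X nX (R n) \<and> norm (y - x) < D (R n) + \<epsilon> n)" for n
  have xs: "xs n \<in> ballX X nX (R n) \<and> norm (y - xs n) < D (R n) + \<epsilon> n" if "n \<ge> 1" for n
  proof -
    have "\<exists>x. x \<in> ballX X nX (R n) \<and> norm (y - x) < D (R n) + \<epsilon> n"
      using Dex[OF Rnn epos[OF that]] by blast
    from someI_ex[OF this] show ?thesis unfolding xs_def using that by simp
  qed
  have xsX: "\<forall>n. xs n \<in> X"
  proof
    fix n show "xs n \<in> X"
      using xs[of n] X0 unfolding ballX_def by (cases "n = 0") (auto simp: xs_def)
  qed
  define t where "t n = 2 powr (real n * \<theta>) * real n powr a * norm (y - xs n)
               + 2 powr (- 2 * real n * real m) * nX (xs n)" for n :: nat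
  have tnn: "t n \<ge> 0" for n unfolding t_def using nXnn xsX by simp
  have lnR: "ln (R n) = real n * (2 * real m * ln 2) - 2 * ln (real n)" if "n \<ge> 1" for n
    using that unfolding R_def by (simp add: ln_mult ln_powr)
  obtain N1 where N1: "\<And>n. n \<ge> N1 \<Longrightarrow> 2*ln(real n) \<le> (ln 4 - 1) * real n"
    using ev_ln by (auto simp: eventually_at_top_linorder)
  have ln4: "ln (4::real) = 2 * ln 2"
    using ln_realpow[of 2 2] by simp
  have lnRge: "ln (R n) \<ge> real n" if "n \<ge> N1" "n \<ge> 1" for n
  proof -
    have "real n * (2 * ln 2) \<le> real n * (2 * real m * ln 2)"
      using assms(4) by (intro mult_left_mono) auto
    thus ?thesis using lnR[OF that(2)] N1[OF that(1)] ln4 by (simp add: algebra_simps)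
  qed
  have bound: "t n \<le> (C + 2) / real n ^ 2" if nh: "n \<ge> N1" "n \<ge> 1" "real n \<ge> R0" for n
  proof -
    have rn: "real n > 0" using nh by simp
    have Rpos: "R n > 0" unfolding R_def using rn by simp
    have lnge: "ln (R n) \<ge> real n" using lnRge nh by simp
    have "R n > ln (R n)" using Rpos by (rule ln_less_self)
    hence "R n \<ge> R0" using lnge nh by linarith
    hence f: "R n powr \<alpha> * ln (R n) powr \<beta> * D (R n) < C" using R0 C_def by simp
    define P where "P = 2 powr (real n * \<theta>) * real n powr a * real n powr 2"
    have "R n powr \<alpha> = 2 powr (2 * real n * real m * \<alpha>) * real n powr (-2 * \<alpha>)"
      unfolding R_def by (simp add: powr_mult powr_powr)
    also have "2 * real n * real m * \<alpha> = real n * \<theta>" unfolding \<alpha>_def using mpos by simp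
    also have "-2 * \<alpha> = - (\<theta> / real m)" unfolding \<alpha>_def using mpos by simp
    finally have Ra: "R n powr \<alpha> = 2 powr (real n * \<theta>) * real n powr (- (\<theta> / real m))" .
    have "R n powr \<alpha> * real n powr \<beta> = 2 powr (real n * \<theta>) * (real n powr (- (\<theta> / real m)) * real n powr \<beta>)"
      unfolding Ra by simp
    also have "real n powr (- (\<theta> / real m)) * real n powr \<beta> = real n powr a * real n powr 2"
      unfolding \<beta>_def by (simp add: powr_add[symmetric]) (simp add: powr_add)
    finally have Pe: "R n powr \<alpha> * real n powr \<beta> = P" unfolding P_def by simp
    have "real n powr \<beta> \<le> ln (R n) powr \<beta>" using powr_mono2[OF bpos _ lnge] rn by simp
    hence "P * D (R n) \<le> R n powr \<alpha> * ln (R n) powr \<beta> * D (R n)"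
      unfolding Pe[symmetric] using Dnn[of "R n"] Rpos
      by (intro mult_right_mono mult_left_mono) auto
    hence PD: "P * D (R n) \<le> C" using f by simp
    define Q where "Q = 2 powr (real n * \<theta>) * real n powr a"
    have Qpos: "Q > 0" unfolding Q_def using rn by simp
    have n2: "real n powr 2 = real n ^ 2" using rn by (simp add: powr_realpow)
    have PQ: "P = Q * real n ^ 2" unfolding P_def Q_def n2 by simp
    have QD: "Q * D (R n) \<le> C / real n ^ 2" using PD rn unfolding PQ by (simp add: field_simps)
    have Qe: "Q * \<epsilon> n = 1 / real n ^ 2"
      unfolding Q_def \<epsilon>_def using rn
      by (simp add: powr_minus powr_realpow field_simps powr_add[symmetric])
    have xn: "norm (y - xs n) < D (R n) + \<epsilon> n" and xb: "nX (xs n) \<le> R n"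
      using xs[OF nh(2)] unfolding ballX_def by auto
    have t1: "Q * norm (y - xs n) \<le> C / real n ^ 2 + 1 / real n ^ 2"
    proof -
      have "Q * norm (y - xs n) \<le> Q * (D (R n) + \<epsilon> n)"
        using xn Qpos by (intro mult_left_mono) auto
      thus ?thesis using QD Qe by (simp add: distrib_left)
    qed
    have t2: "2 powr (- 2 * real n * real m) * nX (xs n) \<le> 1 / real n ^ 2"
    proof -
      have "2 powr (- 2 * real n * real m) * nX (xs n) \<le> 2 powr (- 2 * real n * real m) * R n"
        using xb by (intro mult_left_mono) auto
      also have "\<dots> = real n powr -2"
        unfolding R_def by (simp add: powr_add[symmetric])
      also have "\<dots> = 1 / real n ^ 2" using rn by (simp add: powr_minus powr_realpow divide_inverse)
      finally show ?thesis .
    qed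
    have "t n = Q * norm (y - xs n) + 2 powr (- 2 * real n * real m) * nX (xs n)"
      unfolding t_def Q_def by simp
    also have "\<dots> \<le> (C + 2) / real n ^ 2" using t1 t2 by (simp add: add_divide_distrib)
    finally show ?thesis .
  qed
  have "summable (\<lambda>n. t (Suc n))"
  proof (rule summable_comparison_test_ev)
    show "summable (\<lambda>n. (C + 2) * inverse (real (Suc n) ^ 2))"
    proof -
      have "summable (\<lambda>n. inverse (real n ^ 2))" by (rule inverse_power_summable) simp
      hence "summable (\<lambda>n. inverse (real (Suc n) ^ 2))"
        by (rule summable_Suc_iff[THEN iffD2])
      thus ?thesis by (rule summable_mult)
    qed
    show "eventually (\<lambda>n. norm (t (Suc n)) \<le> (C + 2) * inverse (real (Suc n) ^ 2)) sequentially"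
      unfolding eventually_at_top_linorder
    proof (intro exI allI impI)
      fix n assume n: "n \<ge> max N1 (nat \<lceil>R0\<rceil>)"
      have "real (Suc n) \<ge> R0" using n by linarith
      moreover have "Suc n \<ge> N1" using n by simp
      ultimately have "t (Suc n) \<le> (C + 2) / real (Suc n) ^ 2"
        using bound[of "Suc n"] by simp
      thus "norm (t (Suc n)) \<le> (C + 2) * inverse (real (Suc n) ^ 2)"
        using tnn[of "Suc n"] by (simp add: divide_inverse)
    qed
  qed
  hence "piS \<theta> m a nX y xs = ennreal (\<Sum>n. t (Suc n))"
    unfolding piS_def t_def[symmetric] Let_def by (intro suminf_ennreal2) (use tnn in auto)
  hence "piS \<theta> m a nX y xs < \<infinity>" by simp
  moreover have "rhoS \<theta> m a X nX y \<le> piS \<theta> m a nX y xs"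
    unfolding rhoS_def using xsX by (intro INF_lower) auto
  ultimately show "y \<in> Sspace \<theta> m a X nX" unfolding Sspace_def by simp
qed

end
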